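(* Let $k\ge1$ and $\alpha=(\alpha_{r,\ell})\in\mathbb{N}_0^{k\times k}$ with rows $\alpha_r=(\alpha_{r,1},\ldots,\alpha_{r,k})$. Then \[ \partial_M^{\alpha}\left[\frac{1}{\det(\mathbbm{1}_k+M)}\right]\Bigg|_{M=0}=\begin{cases}(-1)^{|\alpha|}\,|\alpha_1|!\cdots|\alpha_k|! & \text{if } \alpha_1+\cdots+\alpha_k=(|\alpha_1|,\ldots,|\alpha_k|),\\ 0 & \text{otherwise,}\end{cases} \] i.e. the derivative is nonzero exactly when, for every $r$, the $r$-th row sum of $\alpha$ equals its $r$-th column sum.
   Context: $M=(m_{r,\ell})\in\mathbb{C}^{k\times k}$ is a matrix variable, $\mathbbm{1}_k$ the identity, $\partial_M^\alpha=\prod_{r,\ell=1}^k\partial_{m_{r,\ell}}^{\alpha_{r,\ell}}$, $|\alpha_r|=\sum_\ell\alpha_{r,\ell}$, $|\alpha|=\sum_r|\alpha_r|$, and $\alpha_1+\cdots+\alpha_k$ is the componentwise sum of the rows (the vector of column sums). *)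

theory Defs
  imports "HOL-Analysis.Derivative" "Jordan_Normal_Form.Determinant"
begin

text \<open>Matrices M are functions nat => nat => complex, entries indexed by 0..k-1.
  The partial derivative with respect to the entry (r,l):\<close>
definition pd :: "nat \<Rightarrow> nat \<Rightarrow> ((nat \<Rightarrow> nat \<Rightarrow> complex) \<Rightarrow> complex)
                   \<Rightarrow> ((nat \<Rightarrow> nat \<Rightarrow> complex) \<Rightarrow> complex)" where
  "pd r l f = (\<lambda>M. deriv (\<lambda>z. f (M(r := (M r)(l := z)))) (M r l))"

definition mpd :: "nat \<Rightarrow> (nat \<Rightarrow> nat \<Rightarrow> nat) \<Rightarrow> ((nat \<Rightarrow> nat \<Rightarrow> complex) \<Rightarrow> complex)
                   \<Rightarrow> ((nat \<Rightarrow> nat \<Rightarrow> complex) \<Rightarrow> complex)" where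
  "mpd k \<alpha> f = foldr (\<lambda>(r, l) g. (pd r l ^^ \<alpha> r l) g)
                   [(r, l). r \<leftarrow> [0..<k], l \<leftarrow> [0..<k]] f"

definition inv_det :: "nat \<Rightarrow> (nat \<Rightarrow> nat \<Rightarrow> complex) \<Rightarrow> complex" where
  "inv_det k M = 1 / det (1\<^sub>m k + mat k k (\<lambda>(i, j). M i j))"

end

theory Submission
  imports Defs "HOL-Library.Multiset"
begin


fun per :: "(nat \<Rightarrow> nat \<Rightarrow> complex) \<Rightarrow> nat list \<Rightarrow> nat multiset \<Rightarrow> complex" where
  "per B [] Y = (if Y = {#} then 1 else 0)"
| "per B (x#X) Y = (\<Sum>y\<in>#Y. B x y * per B X (Y - {#y#}))"

fun dper :: "(nat \<Rightarrow> nat \<Rightarrow> complex) \<Rightarrow> (nat \<Rightarrow> nat \<Rightarrow> complex) \<Rightarrow> nat list \<Rightarrow> nat multiset \<Rightarrow> complex" where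
  "dper B B' [] Y = 0"
| "dper B B' (x#X) Y = (\<Sum>y\<in>#Y. B' x y * per B X (Y - {#y#}) + B x y * dper B B' X (Y - {#y#}))"

lemma swap_msum:
  fixes g :: "nat \<Rightarrow> nat \<Rightarrow> complex"
  shows "(\<Sum>a\<in>#Y. \<Sum>b\<in>#Y - {#a#}. g a b) = (\<Sum>a\<in>#Y. \<Sum>b\<in>#Y - {#a#}. g b a)"
proof (induction Y)
  case empty
  then show ?case by simp
next
  case (add c Y)
  have e: "\<And>a. a \<in># Y \<Longrightarrow> add_mset c Y - {#a#} = add_mset c (Y - {#a#})"
    by (simp add: diff_union_swap2)
  have L: "(\<Sum>a\<in>#add_mset c Y. \<Sum>b\<in>#add_mset c Y - {#a#}. g a b)
     = (\<Sum>b\<in>#Y. g c b) + (\<Sum>a\<in>#Y. g a c) + (\<Sum>a\<in>#Y. \<Sum>b\<in>#Y - {#a#}. g a b)"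
  proof -
    have "(\<Sum>a\<in>#Y. \<Sum>b\<in>#add_mset c Y - {#a#}. g a b) = (\<Sum>a\<in>#Y. g a c + (\<Sum>b\<in>#Y - {#a#}. g a b))"
      by (rule arg_cong[where f=sum_mset], rule image_mset_cong) (simp add: e)
    then show ?thesis by (simp add: sum_mset.distrib)
  qed
  have R: "(\<Sum>a\<in>#add_mset c Y. \<Sum>b\<in>#add_mset c Y - {#a#}. g b a)
     = (\<Sum>b\<in>#Y. g b c) + (\<Sum>a\<in>#Y. g c a) + (\<Sum>a\<in>#Y. \<Sum>b\<in>#Y - {#a#}. g b a)"
  proof -
    have "(\<Sum>a\<in>#Y. \<Sum>b\<in>#add_mset c Y - {#a#}. g b a) = (\<Sum>a\<in>#Y. g c a + (\<Sum>b\<in>#Y - {#a#}. g b a))"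
      by (rule arg_cong[where f=sum_mset], rule image_mset_cong) (simp add: e)
    then show ?thesis by (simp add: sum_mset.distrib)
  qed
  show ?case unfolding L R add.IH by simp
qed

lemma per_add:
  "per B (l#X) (add_mset r Y) = B l r * per B X Y + (\<Sum>y\<in>#Y. B l y * per B X (add_mset r (Y - {#y#})))"
proof -
  have "(\<Sum>y\<in>#Y. B l y * per B X (add_mset r Y - {#y#})) = (\<Sum>y\<in>#Y. B l y * per B X (add_mset r (Y - {#y#})))"
    by (rule arg_cong[where f=sum_mset], rule image_mset_cong) (simp add: diff_union_swap2)
  then show ?thesis by simp
qed

lemma msum_cmult: "(\<Sum>y\<in>#Y. c * (f y::complex)) = c * (\<Sum>y\<in>#Y. f y)"
  by (induction Y) (auto simp: algebra_simps)

lemma msum_neg: "(\<Sum>y\<in>#Y. - (f y::complex)) = - (\<Sum>y\<in>#Y. f y)"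
  by (induction Y) (auto simp: algebra_simps)


lemma msum_cong: "(\<And>y. y \<in># Y \<Longrightarrow> f y = g y) \<Longrightarrow> (\<Sum>y\<in>#Y. f y) = (\<Sum>y\<in>#Y. g y)"
  by (induction Y) auto

lemma msum_diff: "(\<Sum>y\<in>#Y. (f y::complex) - g y) = (\<Sum>y\<in>#Y. f y) - (\<Sum>y\<in>#Y. g y)"
  by (induction Y) simp_all

lemma msum_neg_cmult: "c * (- (\<Sum>y\<in>#Y. (f y::complex))) = - (\<Sum>y\<in>#Y. c * f y)"
  by (simp only: msum_cmult mult_minus_right)


lemma dper_formula:
  "dper B (\<lambda>i j. - (B i r * B l j)) X Y = - (\<Sum>y\<in>#Y. B l y * per B X (add_mset r (Y - {#y#})))"
proof (induction X arbitrary: Y)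
  case Nil
  then show ?case by simp
next
  case (Cons x X)
  define P where "P = (\<lambda>Z. per B X Z)"
  define Q where "Q = (\<lambda>a b. P (add_mset r (Y - {#a#} - {#b#})))"
  have Qs: "Q a b = Q b a" for a b unfolding Q_def by (metis diff_right_commute)
  have "dper B (\<lambda>i j. - (B i r * B l j)) (x#X) Y
     = (\<Sum>y\<in>#Y. - (B x r * B l y * P (Y - {#y#})) - (\<Sum>y'\<in>#Y - {#y#}. B x y * B l y' * Q y y'))"
    unfolding dper.simps Cons P_def Q_def
    apply (rule msum_cong)
    by (simp only: msum_neg_cmult mult.assoc mult_minus_left diff_conv_add_uminus)
  also have "\<dots> = - (\<Sum>y\<in>#Y. B x r * B l y * P (Y - {#y#})) - (\<Sum>y\<in>#Y. \<Sum>y'\<in>#Y - {#y#}. B x y * B l y' * Q y y')"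
    by (simp only: msum_diff msum_neg)
  also have "(\<Sum>y\<in>#Y. \<Sum>y'\<in>#Y - {#y#}. B x y * B l y' * Q y y') = (\<Sum>y\<in>#Y. \<Sum>y'\<in>#Y - {#y#}. B x y' * B l y * Q y' y)"
    by (rule swap_msum)
  also have "\<dots> = (\<Sum>y\<in>#Y. \<Sum>y'\<in>#Y - {#y#}. B x y' * B l y * Q y y')"
    by (simp only: Qs)
  finally have 1: "dper B (\<lambda>i j. - (B i r * B l j)) (x#X) Y = - (\<Sum>y\<in>#Y. B x r * B l y * P (Y - {#y#})) - (\<Sum>y\<in>#Y. \<Sum>y'\<in>#Y - {#y#}. B x y' * B l y * Q y y')" .
  have 2: "- (\<Sum>y\<in>#Y. B l y * per B (x#X) (add_mset r (Y - {#y#})))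
     = - (\<Sum>y\<in>#Y. B x r * B l y * P (Y - {#y#}) + (\<Sum>y'\<in>#Y - {#y#}. B x y' * B l y * Q y y'))"
    apply (rule arg_cong[where f=uminus])
    apply (rule msum_cong)
    apply (simp only: per_add P_def Q_def)
    apply (simp only: distrib_left msum_cmult[symmetric])
    apply (simp only: mult_ac)
    done
  show ?case unfolding 1 2 by (simp only: sum_mset.distrib minus_add_distrib diff_conv_add_uminus)
qed



lemma msum_delta: "(\<Sum>y\<in>#Y. (if x = y then g y else (0::complex))) = of_nat (count Y x) * g x"
  by (induction Y) (simp_all add: distrib_right)

lemma per_id:
  assumes B: "\<And>i j. i < k \<Longrightarrow> j < k \<Longrightarrow> B i j = (if i = j then 1 else 0)"
  shows "set X \<subseteq> {..<k} \<Longrightarrow> set_mset Y \<subseteq> {..<k} \<Longrightarrow>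
    per B X Y = (if mset X = Y then (\<Prod>v<k. of_nat (fact (count Y v))) else 0)"
proof (induction X arbitrary: Y)
  case Nil
  then show ?case by auto
next
  case (Cons x X)
  have xk: "x < k" using Cons.prems by auto
  have "per B (x#X) Y = (\<Sum>y\<in>#Y. (if x = y then per B X (Y - {#y#}) else 0))"
    using Cons.prems xk by (auto intro!: msum_cong simp: B)
  also have "\<dots> = of_nat (count Y x) * per B X (Y - {#x#})" by (rule msum_delta)
  finally have 1: "per B (x#X) Y = of_nat (count Y x) * per B X (Y - {#x#})" .
  show ?case
  proof (cases "x \<in># Y")
    case False
    then have "mset (x#X) \<noteq> Y" by auto
    with False 1 show ?thesis by (simp add: not_in_iff)
  next
    case True
    have sub: "set_mset (Y - {#x#}) \<subseteq> {..<k}" using Cons.prems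
      by (meson in_diffD subset_iff)
    have IH: "per B X (Y - {#x#}) = (if mset X = Y - {#x#} then (\<Prod>v<k. of_nat (fact (count (Y - {#x#}) v))) else 0)"
      using Cons.IH[OF _ sub] Cons.prems by auto
    have iff: "(mset (x#X) = Y) = (mset X = Y - {#x#})" using True
      by (metis add_mset_remove_trivial insert_DiffM mset.simps(2))
    have cnt: "count Y x > 0" using True by simp
    have "of_nat (count Y x) * (\<Prod>v<k. of_nat (fact (count (Y - {#x#}) v)) :: complex)
        = (\<Prod>v<k. of_nat (fact (count Y v)))"
    proof -
      have "(\<Prod>v<k. of_nat (fact (count (Y - {#x#}) v)) :: complex)
          = of_nat (fact (count Y x - 1)) * (\<Prod>v\<in>{..<k} - {x}. of_nat (fact (count Y v)))"
        using xk by (simp add: prod.remove)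
      moreover have "(\<Prod>v<k. of_nat (fact (count Y v)) :: complex)
          = of_nat (fact (count Y x)) * (\<Prod>v\<in>{..<k} - {x}. of_nat (fact (count Y v)))"
        using xk by (simp add: prod.remove)
      moreover have "(of_nat (fact (count Y x)) :: complex) = of_nat (count Y x) * of_nat (fact (count Y x - 1))"
        using cnt by (simp add: fact_reduce)
      ultimately show ?thesis by simp
    qed
    then show ?thesis using 1 IH iff by auto
  qed
qed

lemma DERIV_msum:
  "(\<And>y. y \<in># Y \<Longrightarrow> ((\<lambda>z. g z y) has_field_derivative g' y) (at x)) \<Longrightarrow>
   ((\<lambda>z. \<Sum>y\<in>#Y. g z y) has_field_derivative (\<Sum>y\<in>#Y. g' y)) (at x)"
proof (induction Y)
  case empty
  then show ?case by simp
next
  case (add c Y)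
  then show ?case by (auto intro!: DERIV_add)
qed

lemma DERIV_per:
  assumes "\<And>i j. ((\<lambda>z. Bz z i j) has_field_derivative B' i j) (at x)"
  shows "((\<lambda>z. per (Bz z) X Y) has_field_derivative dper (Bz x) B' X Y) (at x)"
proof (induction X arbitrary: Y)
  case Nil
  then show ?case by simp
next
  case (Cons a X)
  show ?case unfolding per.simps dper.simps
    apply (rule DERIV_msum)
    apply (rule DERIV_cong)
     apply (rule DERIV_mult[OF assms Cons.IH])
    apply simp
    done
qed



definition Am :: "nat \<Rightarrow> (nat \<Rightarrow> nat \<Rightarrow> complex) \<Rightarrow> complex mat" where
  "Am k M = 1\<^sub>m k + mat k k (\<lambda>(i, j). M i j)"

definition Bm :: "nat \<Rightarrow> (nat \<Rightarrow> nat \<Rightarrow> complex) \<Rightarrow> nat \<Rightarrow> nat \<Rightarrow> complex" where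
  "Bm k M i j = cofactor (Am k M) j i / det (Am k M)"

definition upd :: "(nat \<Rightarrow> nat \<Rightarrow> complex) \<Rightarrow> nat \<Rightarrow> nat \<Rightarrow> complex \<Rightarrow> (nat \<Rightarrow> nat \<Rightarrow> complex)" where
  "upd M r l z = M(r := (M r)(l := z))"

lemma Am_carrier: "Am k M \<in> carrier_mat k k"
  unfolding Am_def by auto

lemma Am_idx: "i < k \<Longrightarrow> j < k \<Longrightarrow> Am k M $$ (i,j) = (if i = j then 1 else 0) + M i j"
  unfolding Am_def by auto

lemma Am_upd: "i < k \<Longrightarrow> j < k \<Longrightarrow>
   Am k (upd M r l z) $$ (i,j) = Am k M $$ (i,j) + (if i = r \<and> j = l then z - M r l else 0)"
  unfolding Am_idx upd_def by auto

lemma inv_det_Am: "inv_det k M = 1 / det (Am k M)"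
  unfolding inv_det_def Am_def by simp

lemma cof_upd: assumes "r < k" shows "cofactor (Am k (upd M r l z)) r j = cofactor (Am k M) r j"
proof -
  have "mat_delete (Am k (upd M r l z)) r j = mat_delete (Am k M) r j"
    unfolding mat_delete_def
    by (rule eq_matI) (auto simp: Am_carrier[THEN carrier_matD(1)] Am_carrier[THEN carrier_matD(2)] Am_idx upd_def)
  then show ?thesis unfolding cofactor_def by simp
qed

lemma det_upd: assumes "r < k" "l < k"
  shows "det (Am k (upd M r l z)) = det (Am k M) + (z - M r l) * cofactor (Am k M) r l"
proof -
  have "det (Am k (upd M r l z)) = (\<Sum>j<k. Am k (upd M r l z) $$ (r,j) * cofactor (Am k (upd M r l z)) r j)"
    by (rule laplace_expansion_row[OF Am_carrier assms(1)])
  also have "\<dots> = (\<Sum>j<k. Am k M $$ (r,j) * cofactor (Am k M) r j + (if j = l then (z - M r l) * cofactor (Am k M) r l else 0))"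
    using assms by (intro sum.cong) (auto simp: Am_upd cof_upd distrib_right)
  also have "\<dots> = det (Am k M) + (z - M r l) * cofactor (Am k M) r l"
    using assms by (simp add: sum.distrib laplace_expansion_row[OF Am_carrier assms(1), symmetric])
  finally show ?thesis .
qed

lemma adj1: assumes A: "A \<in> carrier_mat k k" and ij: "i < k" "j < k"
  shows "(\<Sum>t<k. A $$ (i,t) * cofactor A j t) = (if i = j then det A else 0)"
proof -
  have "(A * adj_mat A) $$ (i,j) = (det A \<cdot>\<^sub>m 1\<^sub>m k) $$ (i,j)" using adj_mat(2)[OF A] by simp
  moreover have "(A * adj_mat A) $$ (i,j) = (\<Sum>t<k. A $$ (i,t) * cofactor A j t)"
    using A ij by (auto simp: adj_mat_def scalar_prod_def atLeast0LessThan intro!: sum.cong)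
  ultimately show ?thesis using A ij by simp
qed

lemma adj2: assumes A: "A \<in> carrier_mat k k" and ij: "i < k" "j < k"
  shows "(\<Sum>t<k. cofactor A t i * A $$ (t,j)) = (if i = j then det A else 0)"
proof -
  have "(adj_mat A * A) $$ (i,j) = (det A \<cdot>\<^sub>m 1\<^sub>m k) $$ (i,j)" using adj_mat(3)[OF A] by simp
  moreover have "(adj_mat A * A) $$ (i,j) = (\<Sum>t<k. cofactor A t i * A $$ (t,j))"
    using A ij by (auto simp: adj_mat_def scalar_prod_def atLeast0LessThan intro!: sum.cong)
  ultimately show ?thesis using A ij by simp
qed

lemma inv1: assumes "det (Am k M) \<noteq> 0" "i < k" "j < k"
  shows "(\<Sum>t<k. Am k M $$ (i,t) * Bm k M t j) = (if i = j then 1 else 0)"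
proof -
  have "(\<Sum>t<k. Am k M $$ (i,t) * Bm k M t j) = (\<Sum>t<k. Am k M $$ (i,t) * cofactor (Am k M) j t) / det (Am k M)"
    unfolding Bm_def sum_divide_distrib by simp
  then show ?thesis using adj1[OF Am_carrier assms(2,3)] assms(1) by simp
qed

lemma inv2: assumes "det (Am k M) \<noteq> 0" "i < k" "j < k"
  shows "(\<Sum>t<k. Bm k M i t * Am k M $$ (t,j)) = (if i = j then 1 else 0)"
proof -
  have "(\<Sum>t<k. Bm k M i t * Am k M $$ (t,j)) = (\<Sum>t<k. cofactor (Am k M) t i * Am k M $$ (t,j)) / det (Am k M)"
    unfolding Bm_def sum_divide_distrib by simp
  then show ?thesis using adj2[OF Am_carrier assms(2,3)] assms(1) by simp
qed



lemma Bm_upd: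
  assumes d: "det (Am k M) \<noteq> 0" and rl: "r < k" "l < k"
    and nz: "1 + (z - M r l) * Bm k M l r \<noteq> 0" and ij: "i < k" "j < k"
  shows "Bm k (upd M r l z) i j = Bm k M i j - (z - M r l) * Bm k M i r * Bm k M l j / (1 + (z - M r l) * Bm k M l r)"
proof -
  define w where "w = z - M r l"
  define B where "B = Bm k M"
  define c where "c = B l r"
  define q where "q = w / (1 + w * c)"
  define A where "A = (\<lambda>i t. Am k M $$ (i,t))"
  define A' where "A' = (\<lambda>i t. Am k (upd M r l z) $$ (i,t))"
  define B' where "B' = Bm k (upd M r l z)"
  define C where "C = (\<lambda>t j. B t j - q * B t r * B l j)"
  have nz': "1 + w * c \<noteq> 0" using nz unfolding w_def c_def B_def .
  have cof: "cofactor (Am k M) r l = det (Am k M) * c"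
    using d unfolding c_def B_def Bm_def by simp
  have "det (Am k (upd M r l z)) = det (Am k M) * (1 + w * c)"
    unfolding det_upd[OF rl] cof w_def by (simp add: distrib_left)
  then have d': "det (Am k (upd M r l z)) \<noteq> 0" using d nz' by simp
  have AC: "(\<Sum>t<k. A' i t * C t j) = (if i = j then 1 else 0)" if ij: "i < k" "j < k" for i j
  proof -
    have "(\<Sum>t<k. A' i t * C t j) = (\<Sum>t<k. A i t * C t j + (if t = l then (if i = r then w * C l j else 0) else 0))"
      using ij unfolding A'_def A_def w_def by (intro sum.cong) (auto simp: Am_upd distrib_right)
    also have "\<dots> = (\<Sum>t<k. A i t * C t j) + (if i = r then w * C l j else 0)"
      using rl by (simp add: sum.distrib)
    also have "(\<Sum>t<k. A i t * C t j) = (\<Sum>t<k. A i t * B t j) - q * B l j * (\<Sum>t<k. A i t * B t r)"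
    proof -
      have "\<And>t. A i t * C t j = A i t * B t j - q * B l j * (A i t * B t r)"
        unfolding C_def by (simp add: right_diff_distrib)
      then show ?thesis by (simp add: sum_subtractf sum_distrib_left)
    qed
    also have "\<dots> = (if i = j then 1 else 0) - q * B l j * (if i = r then 1 else 0)"
      using inv1[OF d ij] inv1[OF d ij(1) rl(1)] unfolding A_def B_def by simp
    also have "w * C l j = q * B l j"
    proof -
      have "w * (B l j - q * c * B l j) = q * B l j"
        unfolding q_def using nz' by (simp add: field_simps)
      then show ?thesis unfolding C_def c_def by (simp add: mult.assoc mult.left_commute)
    qed
    finally show ?thesis by simp
  qed
  have BA: "(\<Sum>s<k. B' i s * A' s t) = (if i = t then 1 else 0)" if "t < k" for t
    using inv2[OF d' ij(1) that] unfolding B'_def A'_def .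
  have "B' i j = (\<Sum>s<k. if s = j then B' i s else 0)"
    using ij by simp
  also have "\<dots> = (\<Sum>s<k. B' i s * (\<Sum>t<k. A' s t * C t j))"
    using ij AC by (intro sum.cong) auto
  also have "\<dots> = (\<Sum>t<k. (\<Sum>s<k. B' i s * A' s t) * C t j)"
  proof -
    have "(\<Sum>s<k. B' i s * (\<Sum>t<k. A' s t * C t j)) = (\<Sum>s<k. \<Sum>t<k. B' i s * A' s t * C t j)"
      by (simp add: sum_distrib_left mult.assoc)
    also have "\<dots> = (\<Sum>t<k. \<Sum>s<k. B' i s * A' s t * C t j)"
      by (rule sum.swap)
    also have "\<dots> = (\<Sum>t<k. (\<Sum>s<k. B' i s * A' s t) * C t j)"
      by (simp add: sum_distrib_right)
    finally show ?thesis .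
  qed
  also have "\<dots> = (\<Sum>t<k. if i = t then C t j else 0)"
    using BA by (intro sum.cong) auto
  also have "\<dots> = C i j" using ij by simp
  finally show ?thesis unfolding B'_def C_def q_def w_def c_def B_def by simp
qed



lemma per_cong:
  assumes "\<And>i j. i < k \<Longrightarrow> j < k \<Longrightarrow> B1 i j = B2 i j"
  shows "set X \<subseteq> {..<k} \<Longrightarrow> set_mset Y \<subseteq> {..<k} \<Longrightarrow> per B1 X Y = per B2 X Y"
proof (induction X arbitrary: Y)
  case Nil
  then show ?case by simp
next
  case (Cons x X)
  have "\<And>y. y \<in># Y \<Longrightarrow> B1 x y * per B1 X (Y - {#y#}) = B2 x y * per B2 X (Y - {#y#})"
  proof -
    fix y assume y: "y \<in># Y"
    have "set_mset (Y - {#y#}) \<subseteq> {..<k}" using Cons.prems by (meson in_diffD subset_iff)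
    then have "per B1 X (Y - {#y#}) = per B2 X (Y - {#y#})" using Cons by auto
    moreover have "B1 x y = B2 x y" using Cons.prems y assms by auto
    ultimately show "B1 x y * per B1 X (Y - {#y#}) = B2 x y * per B2 X (Y - {#y#})" by simp
  qed
  then show ?case unfolding per.simps by (rule msum_cong)
qed

lemma step:
  assumes G: "\<And>M. det (Am k M) \<noteq> 0 \<Longrightarrow> G M = s * inv_det k M * per (Bm k M) X Y"
    and X: "set X \<subseteq> {..<k}" and Y: "set_mset Y \<subseteq> {..<k}"
    and rl: "r < k" "l < k" and d: "det (Am k M) \<noteq> 0"
  shows "pd r l G M = s * (- (inv_det k M * per (Bm k M) (l#X) (add_mset r Y)))"
proof -
  define z0 where "z0 = M r l"
  define B where "B = Bm k M"
  define c where "c = B l r"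
  define f0 where "f0 = inv_det k M"
  define Bz where "Bz = (\<lambda>z i j. B i j - (z - z0) * B i r * B l j / (1 + (z - z0) * c))"
  define H where "H = (\<lambda>z. s * (f0 / (1 + (z - z0) * c)) * per (Bz z) X Y)"
  define S where "S = {z. 1 + (z - z0) * c \<noteq> 0}"
  have openS: "open S" unfolding S_def
    by (intro open_Collect_neq continuous_intros)
  have z0S: "z0 \<in> S" unfolding S_def by simp
  have cof: "cofactor (Am k M) r l = det (Am k M) * c"
    using d unfolding c_def B_def Bm_def by simp
  have eq: "G (M(r := (M r)(l := z))) = H z" if zS: "z \<in> S" for z
  proof -
    have nz: "1 + (z - z0) * c \<noteq> 0" using zS unfolding S_def by simp
    have dz: "det (Am k (upd M r l z)) = det (Am k M) * (1 + (z - z0) * c)"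
      unfolding det_upd[OF rl] cof z0_def by (simp add: distrib_left)
    then have dz': "det (Am k (upd M r l z)) \<noteq> 0" using d nz by simp
    have "inv_det k (upd M r l z) = f0 / (1 + (z - z0) * c)"
      unfolding inv_det_Am dz f0_def by simp
    moreover have "per (Bm k (upd M r l z)) X Y = per (Bz z) X Y"
    proof -
      have nz2: "1 + (z - M r l) * Bm k M l r \<noteq> 0" using nz unfolding z0_def c_def B_def .
      show ?thesis
        apply (rule per_cong[OF _ X Y])
        unfolding Bz_def B_def z0_def c_def
        by (rule Bm_upd[OF d rl nz2])
    qed
    ultimately show ?thesis using G[OF dz'] unfolding H_def upd_def by simp
  qed
  have Bz0: "Bz z0 = B" unfolding Bz_def by simp
  have dB: "((\<lambda>z. Bz z i j) has_field_derivative - (B i r * B l j)) (at z0)" for i j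
    unfolding Bz_def by (auto intro!: derivative_eq_intros)
  have dper: "((\<lambda>z. per (Bz z) X Y) has_field_derivative dper B (\<lambda>i j. - (B i r * B l j)) X Y) (at z0)"
    using DERIV_per[of Bz "\<lambda>i j. - (B i r * B l j)" z0 X Y, OF dB] Bz0 by simp
  have df: "((\<lambda>z. f0 / (1 + (z - z0) * c)) has_field_derivative - (f0 * c)) (at z0)"
    by (auto intro!: derivative_eq_intros simp: power2_eq_square)
  have dH: "(H has_field_derivative s * (- (f0 * c) * per B X Y + f0 * dper B (\<lambda>i j. - (B i r * B l j)) X Y)) (at z0)"
    unfolding H_def
    apply (rule DERIV_cong)
     apply (rule DERIV_mult[OF DERIV_cmult[OF df] dper])
    using Bz0 by (simp add: algebra_simps)
  have val: "s * (- (f0 * c) * per B X Y + f0 * dper B (\<lambda>i j. - (B i r * B l j)) X Y)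
      = s * (- (f0 * per B (l#X) (add_mset r Y)))"
    unfolding dper_formula per_add c_def by (simp add: algebra_simps)
  have "((\<lambda>z. G (M(r := (M r)(l := z)))) has_field_derivative s * (- (f0 * per B (l#X) (add_mset r Y)))) (at z0)"
    apply (rule has_field_derivative_transform_within_open[OF _ openS z0S])
     apply (rule DERIV_cong[OF dH val])
    using eq by simp
  then show ?thesis unfolding pd_def z0_def f0_def B_def by (rule DERIV_imp_deriv)
qed



lemma slc: "sum_list (map g (concat xss)) = sum_list (map (\<lambda>xs. sum_list (map g xs)) xss)"
  by (induction xss) auto
lemma slu: "sum_list (map f [0..<k]) = (\<Sum>r<k. (f r::nat))"
  by (simp add: interv_sum_list_conv_sum_set_nat atLeast0LessThan)
lemma sl: "sum_list (map g [(r,l). r\<leftarrow>[0..<k], l\<leftarrow>[0..<k]]) = (\<Sum>r<k. \<Sum>l<k. (g (r,l) :: nat))"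
  by (simp add: slc comp_def slu)

definition dl :: "(nat \<times> nat) list \<Rightarrow> ((nat \<Rightarrow> nat \<Rightarrow> complex) \<Rightarrow> complex) \<Rightarrow> ((nat \<Rightarrow> nat \<Rightarrow> complex) \<Rightarrow> complex)" where
  "dl Es G = foldr (\<lambda>(r,l) g. pd r l g) Es G"

lemma dl_Nil[simp]: "dl [] G = G" unfolding dl_def by simp
lemma dl_Cons[simp]: "dl ((r,l)#Es) G = pd r l (dl Es G)" unfolding dl_def by simp
lemma dl_append: "dl (xs @ ys) G = dl xs (dl ys G)" unfolding dl_def by simp

lemma dl_rep: "(pd r l ^^ n) g = dl (replicate n (r,l)) g"
  by (induction n) auto

definition edges :: "nat \<Rightarrow> (nat \<Rightarrow> nat \<Rightarrow> nat) \<Rightarrow> (nat \<times> nat) list" where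
  "edges k \<alpha> = concat (map (\<lambda>(r,l). replicate (\<alpha> r l) (r,l)) [(r, l). r \<leftarrow> [0..<k], l \<leftarrow> [0..<k]])"

lemma mpd_dl_gen: "foldr (\<lambda>(r, l) g. (pd r l ^^ \<alpha> r l) g) L f = dl (concat (map (\<lambda>(r,l). replicate (\<alpha> r l) (r,l)) L)) f"
  by (induction L) (auto simp: dl_rep dl_append)

lemma mpd_dl: "mpd k \<alpha> f = dl (edges k \<alpha>) f"
  unfolding mpd_def edges_def by (rule mpd_dl_gen)

lemma edges_set: "set (edges k \<alpha>) \<subseteq> {..<k} \<times> {..<k}"
  unfolding edges_def by auto

lemma count_gen: "count (mset (map h (concat (map (\<lambda>(r,l). replicate (\<alpha> r l) (r,l)) L)))) v
   = sum_list (map (\<lambda>(r,l). if h (r,l) = v then \<alpha> r l else 0) L)"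
  by (induction L) auto

lemma length_gen: "length (concat (map (\<lambda>(r,l). replicate (\<alpha> r l) (r,l)) L))
   = sum_list (map (\<lambda>(r,l). \<alpha> r l) L)"
  by (induction L) auto

lemma main_gen:
  assumes "set Es \<subseteq> {..<k} \<times> {..<k}"
  shows "det (Am k M) \<noteq> 0 \<Longrightarrow>
    dl Es (inv_det k) M = (-1) ^ length Es * inv_det k M * per (Bm k M) (map snd Es) (mset (map fst Es))"
  using assms
proof (induction Es arbitrary: M)
  case Nil
  then show ?case by simp
next
  case (Cons e Es)
  obtain r l where e: "e = (r,l)" by (cases e)
  have rl: "r < k" "l < k" using Cons.prems e by auto
  have X: "set (map snd Es) \<subseteq> {..<k}" and Y: "set_mset (mset (map fst Es)) \<subseteq> {..<k}"
    using Cons.prems by auto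
  have "dl (e#Es) (inv_det k) M = pd r l (dl Es (inv_det k)) M" using e by simp
  also have "\<dots> = (-1) ^ length Es * (- (inv_det k M * per (Bm k M) (l # map snd Es) (add_mset r (mset (map fst Es)))))"
    by (rule step[OF _ X Y rl Cons.prems(1)]) (use Cons in auto)
  finally show ?case using e by simp
qed

lemma Am_zero: "Am k (\<lambda>_ _. 0) = 1\<^sub>m k"
  by (rule eq_matI) (auto simp: Am_def)

lemma Bm_zero: assumes "i < k" "j < k" shows "Bm k (\<lambda>_ _. 0) i j = (if i = j then 1 else 0)"
proof -
  have "(\<Sum>t<k. (1\<^sub>m k :: complex mat) $$ (i,t) * cofactor (1\<^sub>m k) j t) = (if i = j then det (1\<^sub>m k :: complex mat) else 0)"
    by (rule adj1[OF _ assms]) auto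
  moreover have "(\<Sum>t<k. (1\<^sub>m k :: complex mat) $$ (i,t) * cofactor (1\<^sub>m k) j t) = cofactor (1\<^sub>m k) j i"
  proof -
    have "(\<Sum>t<k. (1\<^sub>m k :: complex mat) $$ (i,t) * cofactor (1\<^sub>m k) j t) = (\<Sum>t<k. if t = i then cofactor (1\<^sub>m k) j t else 0)"
      using assms by (intro sum.cong) auto
    then show ?thesis using assms by simp
  qed
  ultimately show ?thesis unfolding Bm_def Am_zero by simp
qed

theorem mainTheorem2:
  fixes k :: nat and \<alpha> :: "nat \<Rightarrow> nat \<Rightarrow> nat"
  assumes "k \<ge> 1"
  shows "mpd k \<alpha> (inv_det k) (\<lambda>_ _. 0) =
    (if (\<forall>r<k. (\<Sum>s<k. \<alpha> s r) = (\<Sum>l<k. \<alpha> r l))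
     then (-1) ^ (\<Sum>r<k. \<Sum>l<k. \<alpha> r l) * (\<Prod>r<k. of_nat (fact (\<Sum>l<k. \<alpha> r l)))
     else 0)"
proof -
  define Es where "Es = edges k \<alpha>"
  define X where "X = map snd Es"
  define Y where "Y = mset (map fst Es)"
  have d0: "det (Am k (\<lambda>_ _. 0)) \<noteq> 0" unfolding Am_zero by simp
  have inv0: "inv_det k (\<lambda>_ _. 0) = 1" unfolding inv_det_Am Am_zero by simp
  have Xk: "set X \<subseteq> {..<k}" and Yk: "set_mset Y \<subseteq> {..<k}"
    using edges_set[of k \<alpha>] unfolding X_def Y_def Es_def by auto
  have cY: "count Y v = (\<Sum>r<k. \<Sum>l<k. if r = v then \<alpha> r l else 0)" for v
    unfolding Y_def Es_def edges_def count_gen[of fst] sl by simp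
  have cX: "count (mset X) v = (\<Sum>r<k. \<Sum>l<k. if l = v then \<alpha> r l else 0)" for v
    unfolding X_def Es_def edges_def count_gen[of snd] sl by simp
  have len: "length Es = (\<Sum>r<k. \<Sum>l<k. \<alpha> r l)"
    unfolding Es_def edges_def length_gen sl by (simp add: case_prod_beta)
  have cYk: "count Y v = (\<Sum>l<k. \<alpha> v l)" if "v < k" for v
    unfolding cY using that by (simp add: sum.swap[of _ "{..<k}" "{..<k}"] cong: sum.cong)
  have cXk: "count (mset X) v = (\<Sum>s<k. \<alpha> s v)" if "v < k" for v
    unfolding cX using that by (simp add: sum.delta cong: sum.cong)
  have cYn: "count Y v = 0" if "\<not> v < k" for v
    unfolding cY using that by (auto intro!: sum.neutral)
  have cXn: "count (mset X) v = 0" if "\<not> v < k" for v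
    unfolding cX using that by (auto intro!: sum.neutral)
  have iff: "(mset X = Y) = (\<forall>r<k. (\<Sum>s<k. \<alpha> s r) = (\<Sum>l<k. \<alpha> r l))"
    unfolding multiset_eq_iff
    by (metis cXk cYk cXn cYn)
  have P: "per (Bm k (\<lambda>_ _. 0)) X Y = (if mset X = Y then (\<Prod>v<k. of_nat (fact (count Y v))) else 0)"
    by (rule per_id[OF Bm_zero Xk Yk])
  have prodeq: "(\<Prod>v<k. (of_nat (fact (count Y v)) :: complex)) = (\<Prod>r<k. of_nat (fact (\<Sum>l<k. \<alpha> r l)))"
    by (rule prod.cong) (auto simp: cYk)
  have "mpd k \<alpha> (inv_det k) (\<lambda>_ _. 0) = dl Es (inv_det k) (\<lambda>_ _. 0)"
    unfolding mpd_dl Es_def ..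
  also have "\<dots> = (-1) ^ length Es * inv_det k (\<lambda>_ _. 0) * per (Bm k (\<lambda>_ _. 0)) (map snd Es) (mset (map fst Es))"
    by (rule main_gen[OF _ d0]) (simp add: Es_def edges_set)
  finally have "mpd k \<alpha> (inv_det k) (\<lambda>_ _. 0) = (-1) ^ length Es * per (Bm k (\<lambda>_ _. 0)) X Y"
    unfolding inv0 X_def Y_def by simp
  then show ?thesis unfolding P iff len prodeq by simp
qed


end
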